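(* Let $d\geq 1$ and let $c>b>0$ be integers with $d$-binomial expansions $b=\binom{b_d}{d}+\cdots+\binom{b_j}{j}$, $b_d>b_{d-1}>\cdots>b_j\geq j\geq 1$, and $c=\binom{c_d}{d}+\cdots+\binom{c_i}{i}$, $c_d>\cdots>c_i\geq i\geq 1$. Then $b^{(d)}=c^{(d)}$ if and only if $j\geq 2$ and $c-b\leq j-1$.
   Context: For a positive integer $d$, every integer $a>0$ has a unique representation (the $d$-binomial or Macaulay expansion) $a=\binom{a_d}{d}+\binom{a_{d-1}}{d-1}+\cdots+\binom{a_j}{j}$ with $a_d>a_{d-1}>\cdots>a_j\geq j\geq 1$. For such an expansion one defines $a^{(d)}=\binom{a_d}{d+1}+\cdots+\binom{a_j}{j+1}$ (with $\binom{m}{r}=0$ for $m<r$). *)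

theory Defs
  imports Main
begin

text \<open>A d-binomial (Macaulay) expansion of a is encoded by the list
  xs = [a_d, a_(d-1), ..., a_j], i.e. xs ! k = a_(d-k), with j = d + 1 - length xs.\<close>

definition macaulay_rep :: "nat \<Rightarrow> nat \<Rightarrow> nat list \<Rightarrow> bool" where
  "macaulay_rep d a xs \<longleftrightarrow>
     xs \<noteq> [] \<and> length xs \<le> d \<and> sorted_wrt (>) xs \<and>
     last xs \<ge> d + 1 - length xs \<and>
     a = (\<Sum>k<length xs. (xs ! k) choose (d - k))"

definition macaulay_low :: "nat \<Rightarrow> nat list \<Rightarrow> nat" where
  "macaulay_low d xs = d + 1 - length xs"

definition macaulay_upper :: "nat \<Rightarrow> nat \<Rightarrow> nat" where
  "macaulay_upper d a =
     (let xs = (THE xs. macaulay_rep d a xs)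
      in (\<Sum>k<length xs. (xs ! k) choose (d - k + 1)))"

end

theory Submission
  imports Defs
begin

lemma hock1: "(\<Sum>i=1..t. (m+i) choose i) + 1 = (m+t+1) choose t"
  by (induction t) (auto simp: add.commute)

lemma hock2: "(\<Sum>i=1..t. (m+i) choose (i+1)) + m + 1 = (m+t+1) choose (t+1)"
  by (induction t) (auto simp: add.commute)

lemma gap:
  assumes s: "\<And>i. 1 \<le> i \<Longrightarrow> i < d \<Longrightarrow> G i < G (Suc i)"
  shows "1 \<le> i \<Longrightarrow> i \<le> k \<Longrightarrow> k \<le> d \<Longrightarrow> G i + (k - i) \<le> G k"
proof (induction k)
  case 0 then show ?case by simp
next
  case (Suc k)
  show ?case
  proof (cases "i = Suc k")
    case True then show ?thesis by simp
  next
    case False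
    then have "i \<le> k" using Suc by simp
    with Suc have "G i + (k - i) \<le> G k" by simp
    moreover have "G k < G (Suc k)" using s[of k] Suc \<open>i \<le> k\<close> by simp
    ultimately show ?thesis using \<open>i \<le> k\<close> by simp
  qed
qed

lemma key:
  fixes G H :: "nat \<Rightarrow> nat"
  assumes sG: "\<And>i. 1 \<le> i \<Longrightarrow> i < d \<Longrightarrow> G i < G (Suc i)"
    and sH: "\<And>i. 1 \<le> i \<Longrightarrow> i < d \<Longrightarrow> H i < H (Suc i)"
    and t: "1 \<le> t" "t \<le> d" and lt: "G t < H t"
    and j: "1 \<le> j" "j \<le> d" and jl: "\<And>i. 1 \<le> i \<Longrightarrow> i < j \<Longrightarrow> G i = i - 1"
    and jg: "j \<le> G j"
    and eq: "\<And>i. t < i \<Longrightarrow> i \<le> d \<Longrightarrow> G i = H i"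
  shows "(\<Sum>i=1..t. G i choose i) < (\<Sum>i=1..t. H i choose i)
     \<and> (\<Sum>i=1..t. G i choose (i+1)) \<le> (\<Sum>i=1..t. H i choose (i+1))
     \<and> ((\<Sum>i=1..t. G i choose (i+1)) = (\<Sum>i=1..t. H i choose (i+1)) \<longleftrightarrow>
         (2 \<le> j \<and> (\<Sum>i=1..t. H i choose i) - (\<Sum>i=1..t. G i choose i) \<le> j - 1))"
proof -
  define lG where "lG = (\<Sum>i=1..t. G i choose i)"
  define lH where "lH = (\<Sum>i=1..t. H i choose i)"
  define uG where "uG = (\<Sum>i=1..t. G i choose (i+1))"
  define uH where "uH = (\<Sum>i=1..t. H i choose (i+1))"
  have gG: "\<And>i k. 1 \<le> i \<Longrightarrow> i \<le> k \<Longrightarrow> k \<le> d \<Longrightarrow> G i + (k - i) \<le> G k"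
    using gap[of d G, OF sG] by blast
  have gH: "\<And>i k. 1 \<le> i \<Longrightarrow> i \<le> k \<Longrightarrow> k \<le> d \<Longrightarrow> H i + (k - i) \<le> H k"
    using gap[of d H, OF sH] by blast
  have Ht_lH: "H t choose t \<le> lH" unfolding lH_def
    by (rule member_le_sum) (use t in auto)
  have Ht_uH: "H t choose (t+1) \<le> uH" unfolding uH_def
    by (rule member_le_sum) (use t in auto)
  show ?thesis
  proof (cases "t \<le> G t")
    case True
    define m where "m = G t - t"
    have jt: "j \<le> t"
    proof (rule ccontr)
      assume "\<not> j \<le> t" then have "G t = t - 1" using jl[of t] t by simp
      with True t show False by simp
    qed
    have Gi: "G i \<le> m + i" if "i \<in> {1..t}" for i
      using gG[of i t] that t True unfolding m_def by auto
    have tw: "(G i choose i) + (if i < j then 1 else 0) \<le> (m+i) choose i" if "i \<in> {1..t}" for i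
    proof (cases "i < j")
      case True
      then have "G i choose i = 0" using jl[of i] that by simp
      moreover have "0 < (m+i) choose i" by (rule zero_less_binomial) simp
      ultimately show ?thesis using True by (simp del: binomial_eq_0_iff zero_less_binomial_iff add: Suc_le_eq)
    next
      case False then show ?thesis using binomial_right_mono[OF Gi[OF that]] by simp
    qed
    have ind: "(\<Sum>i=1..t. (if i < j then 1 else 0::nat)) = j - 1"
    proof -
      have "(\<Sum>i=1..t. (if i < j then 1 else 0::nat)) = card ({1..t} \<inter> {i. i < j})"
        by (simp add: sum.If_cases)
      also have "{1..t} \<inter> {i. i < j} = {1..<j}" using jt by auto
      finally show ?thesis by simp
    qed
    have "lG + (j - 1) \<le> (\<Sum>i=1..t. (m+i) choose i)"
      unfolding lG_def ind[symmetric] sum.distrib[symmetric] by (rule sum_mono) (rule tw)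
    then have "lG + (j - 1) + 1 \<le> (m+t+1) choose t" using hock1[where t=t and m=m] by simp
    also have "m + t + 1 = G t + 1" using True m_def by simp
    also have "G t + 1 choose t \<le> H t choose t" by (rule binomial_right_mono) (use lt in simp)
    finally have A: "lG + j \<le> lH" using Ht_lH j by simp
    have "uG \<le> (\<Sum>i=1..t. (m+i) choose (i+1))"
      unfolding uG_def by (rule sum_mono) (rule binomial_right_mono[OF Gi])
    then have "uG + m + 1 \<le> (m+t+1) choose (t+1)" using hock2[where t=t and m=m] by simp
    also have "m + t + 1 = G t + 1" using True m_def by simp
    also have "G t + 1 choose (t+1) \<le> H t choose (t+1)" by (rule binomial_right_mono) (use lt in simp)
    finally have B: "uG < uH" using Ht_uH by simp
    show ?thesis using A B j unfolding lG_def[symmetric] lH_def[symmetric] uG_def[symmetric] uH_def[symmetric]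
      by auto
  next
    case False
    have Gsmall: "G i < i" if "i \<in> {1..t}" for i
      using gG[of i t] that t False by auto
    have lG0: "lG = 0" unfolding lG_def using Gsmall by simp
    have uG0: "uG = 0" unfolding uG_def using Gsmall by fastforce
    have tj: "t < j"
    proof (rule ccontr)
      assume "\<not> t < j"
      then have "G j + (t - j) \<le> G t" using gG[of j t] j t by simp
      with jg False \<open>\<not> t < j\<close> show False by simp
    qed
    have Gt: "G t = t - 1" using jl[of t] t tj by simp
    have jt: "j = t + 1"
    proof (rule ccontr)
      assume "j \<noteq> t + 1"
      then have "t + 1 < j" using tj by simp
      then have "G (Suc t) = t" using jl[of "Suc t"] by simp
      moreover have "G (Suc t) = H (Suc t)" using eq[of "Suc t"] \<open>t+1<j\<close> j by simp
      moreover have "H t < H (Suc t)" using sH[of t] t \<open>t+1<j\<close> j by simp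
      ultimately show False using lt Gt by simp
    qed
    have Htt: "t \<le> H t" using lt Gt by simp
    have A: "0 < lH" using Ht_lH zero_less_binomial[OF Htt] by (metis less_le_trans)
    have C: "uH = 0 \<longleftrightarrow> lH \<le> t"
    proof
      assume "uH = 0"
      then have "\<forall>i\<in>{1..t}. H i choose (i+1) = 0" unfolding uH_def by simp
      then have "\<And>i. i \<in> {1..t} \<Longrightarrow> H i choose i \<le> 1"
      proof -
        fix i assume "i \<in> {1..t}"
        with \<open>\<forall>i\<in>{1..t}. H i choose (i+1) = 0\<close> have "H i \<le> i"
          by (metis binomial_eq_0_iff Suc_eq_plus1 less_Suc_eq_le)
        then show "H i choose i \<le> 1" by (cases "H i = i") (simp_all add: binomial_eq_0)
      qed
      then have "lH \<le> (\<Sum>i=1..t. (1::nat))" unfolding lH_def by (rule sum_mono)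
      then show "lH \<le> t" by simp
    next
      assume le: "lH \<le> t"
      show "uH = 0"
      proof (rule ccontr)
        assume "uH \<noteq> 0"
        then obtain i where i: "i \<in> {1..t}" "H i choose (i+1) \<noteq> 0" unfolding uH_def
          using sum.not_neutral_contains_not_neutral by blast
        then have "i + 1 \<le> H i" by simp
        moreover have "H i + (t - i) \<le> H t" using gH[of i t] i t by simp
        ultimately have "Suc t \<le> H t" using i by simp
        then have "Suc t choose t \<le> H t choose t" by (rule binomial_right_mono)
        then show False using Ht_lH le by simp
      qed
    qed
    have "2 \<le> j" using jt t by simp
    then show ?thesis using A C lG0 uG0 jt
      unfolding lG_def[symmetric] lH_def[symmetric] uG_def[symmetric] uH_def[symmetric]
      by simp
  qed
qed


lemma reidx:
  fixes F :: "nat \<Rightarrow> nat"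
  assumes "L \<le> d" "\<And>i. 1 \<le> i \<Longrightarrow> i + L \<le> d \<Longrightarrow> F i = 0"
  shows "(\<Sum>k<L. F (d - k)) = (\<Sum>i=1..d. F i)"
proof -
  have "(\<Sum>k<L. F (d - k)) = (\<Sum>i\<in>{d+1-L..d}. F i)"
    by (rule sum.reindex_bij_witness[where i="\<lambda>b. d - b" and j="\<lambda>k. d - k"])
       (use assms(1) in auto)
  also have "\<dots> = (\<Sum>i=1..d. F i)"
    by (rule sum.mono_neutral_left) (use assms in auto)
  finally show ?thesis .
qed

definition gf :: "nat \<Rightarrow> nat list \<Rightarrow> nat \<Rightarrow> nat" where
  "gf d xs i = (if i + length xs \<le> d then i - 1 else xs ! (d - i))"

lemma gf_nth: "k < length xs \<Longrightarrow> length xs \<le> d \<Longrightarrow> gf d xs (d - k) = xs ! k"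
  unfolding gf_def by auto

lemma rep_facts:
  assumes r: "macaulay_rep d a xs"
  shows "\<And>i. 1 \<le> i \<Longrightarrow> i < d \<Longrightarrow> gf d xs i < gf d xs (Suc i)"
    and "a = (\<Sum>i=1..d. gf d xs i choose i)"
    and "(\<Sum>k<length xs. xs ! k choose (d - k + 1)) = (\<Sum>i=1..d. gf d xs i choose (i+1))"
    and "1 \<le> macaulay_low d xs" "macaulay_low d xs \<le> d"
    and "\<And>i. 1 \<le> i \<Longrightarrow> i < macaulay_low d xs \<Longrightarrow> gf d xs i = i - 1"
    and "macaulay_low d xs \<le> gf d xs (macaulay_low d xs)"
proof -
  have ne: "xs \<noteq> []" and Ld: "length xs \<le> d" and so: "sorted_wrt (>) xs"
    and la: "last xs \<ge> d + 1 - length xs"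
    and av: "a = (\<Sum>k<length xs. (xs ! k) choose (d - k))"
    using r unfolding macaulay_rep_def by auto
  let ?L = "length xs"
  have L1: "1 \<le> ?L" using ne by (cases xs) auto
  have lastn: "last xs = xs ! (?L - 1)" using ne by (simp add: last_conv_nth)
  show "\<And>i. 1 \<le> i \<Longrightarrow> i < d \<Longrightarrow> gf d xs i < gf d xs (Suc i)"
  proof -
    fix i assume i: "1 \<le> i" "i < d"
    consider "Suc i + ?L \<le> d" | "i + ?L = d" | "d < i + ?L" by linarith
    then show "gf d xs i < gf d xs (Suc i)"
    proof cases
      case 1 then show ?thesis using i unfolding gf_def by auto
    next
      case 2
      have "d - Suc i = ?L - 1" using 2 by simp
      then have "gf d xs (Suc i) = last xs" unfolding gf_def using lastn L1 2
        by simp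
      moreover have "gf d xs i = i - 1" using 2 unfolding gf_def by simp
      ultimately show ?thesis using la 2 by simp
    next
      case 3
      then have "gf d xs i = xs ! (d - i)" "gf d xs (Suc i) = xs ! (d - Suc i)"
        unfolding gf_def by auto
      moreover have "xs ! (d - Suc i) > xs ! (d - i)"
        using so 3 i by (auto simp: sorted_wrt_iff_nth_less)
      ultimately show ?thesis by simp
    qed
  qed
  have z1: "gf d xs i choose i = 0" if "1 \<le> i" "i + ?L \<le> d" for i
    using that unfolding gf_def by simp
  have z2: "gf d xs i choose (i+1) = 0" if "1 \<le> i" "i + ?L \<le> d" for i
    using that unfolding gf_def by simp
  have "a = (\<Sum>k<?L. (\<lambda>i. gf d xs i choose i) (d - k))"
    unfolding av using gf_nth[OF _ Ld] Ld by (intro sum.cong) auto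
  also have "\<dots> = (\<Sum>i=1..d. gf d xs i choose i)"
    by (rule reidx[OF Ld]) (rule z1)
  finally show "a = (\<Sum>i=1..d. gf d xs i choose i)" .
  have "(\<Sum>k<?L. xs ! k choose (d - k + 1)) = (\<Sum>k<?L. (\<lambda>i. gf d xs i choose (i+1)) (d - k))"
    using gf_nth[OF _ Ld] Ld by (intro sum.cong) auto
  also have "\<dots> = (\<Sum>i=1..d. gf d xs i choose (i+1))"
    by (rule reidx[OF Ld]) (rule z2)
  finally show "(\<Sum>k<?L. xs ! k choose (d - k + 1)) = (\<Sum>i=1..d. gf d xs i choose (i+1))" .
  show "1 \<le> macaulay_low d xs" "macaulay_low d xs \<le> d"
    unfolding macaulay_low_def using Ld L1 by auto
  show "\<And>i. 1 \<le> i \<Longrightarrow> i < macaulay_low d xs \<Longrightarrow> gf d xs i = i - 1"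
    unfolding macaulay_low_def gf_def by auto
  have "gf d xs (macaulay_low d xs) = last xs"
    unfolding macaulay_low_def gf_def using lastn L1 Ld by auto
  then show "macaulay_low d xs \<le> gf d xs (macaulay_low d xs)"
    using la unfolding macaulay_low_def by simp
qed


lemma split_sum: "t \<le> d \<Longrightarrow> (\<Sum>i=1..d. F i) = (\<Sum>i=1..t. F i) + (\<Sum>i=Suc t..d. (F i::nat))"
proof -
  assume "t \<le> d"
  then have "{1..d} = {1..t} \<union> {Suc t..d}" by auto
  then show ?thesis by (simp add: sum.union_disjoint)
qed

lemma cmp:
  assumes rx: "macaulay_rep d a xs" and ry: "macaulay_rep d a' ys"
    and t: "1 \<le> t" "t \<le> d" and lt: "gf d xs t < gf d ys t"
    and eq: "\<And>i. t < i \<Longrightarrow> i \<le> d \<Longrightarrow> gf d xs i = gf d ys i"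
  shows "a < a'"
    and "(\<Sum>i=1..d. gf d xs i choose (i+1)) = (\<Sum>i=1..d. gf d ys i choose (i+1)) \<longleftrightarrow>
         (2 \<le> macaulay_low d xs \<and> a' - a \<le> macaulay_low d xs - 1)"
proof -
  note fx = rep_facts[OF rx] and fy = rep_facts[OF ry]
  note K = key[where G="gf d xs" and H="gf d ys" and d=d and t=t and j="macaulay_low d xs",
      OF fx(1) fy(1) t lt fx(4) fx(5) fx(6) fx(7) eq]
  have hi1: "(\<Sum>i=Suc t..d. gf d xs i choose i) = (\<Sum>i=Suc t..d. gf d ys i choose i)"
    using eq by (intro sum.cong) auto
  have hi2: "(\<Sum>i=Suc t..d. gf d xs i choose (i+1)) = (\<Sum>i=Suc t..d. gf d ys i choose (i+1))"
    using eq by (intro sum.cong) auto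
  have A: "a = (\<Sum>i=1..t. gf d xs i choose i) + (\<Sum>i=Suc t..d. gf d xs i choose i)"
    using fx(2) split_sum[OF t(2)] by metis
  have B: "a' = (\<Sum>i=1..t. gf d ys i choose i) + (\<Sum>i=Suc t..d. gf d xs i choose i)"
    using fy(2) split_sum[OF t(2)] hi1 by metis
  have U: "(\<Sum>i=1..d. gf d xs i choose (i+1)) = (\<Sum>i=1..d. gf d ys i choose (i+1)) \<longleftrightarrow>
     (\<Sum>i=1..t. gf d xs i choose (i+1)) = (\<Sum>i=1..t. gf d ys i choose (i+1))"
    using split_sum[OF t(2), where F="\<lambda>i. gf d xs i choose (i+1)"]
      split_sum[OF t(2), where F="\<lambda>i. gf d ys i choose (i+1)"] hi2 by simp
  have D: "a' - a = (\<Sum>i=1..t. gf d ys i choose i) - (\<Sum>i=1..t. gf d xs i choose i)"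
    using A B by simp
  show "a < a'" using A B K by linarith
  show "(\<Sum>i=1..d. gf d xs i choose (i+1)) = (\<Sum>i=1..d. gf d ys i choose (i+1)) \<longleftrightarrow>
         (2 \<le> macaulay_low d xs \<and> a' - a \<le> macaulay_low d xs - 1)"
    unfolding U D using K by blast
qed


lemma first_diff:
  fixes G H :: "nat \<Rightarrow> nat"
  assumes "\<exists>i\<in>{1..d}. G i \<noteq> H i"
  obtains t where "1 \<le> t" "t \<le> d" "G t \<noteq> H t" "\<And>i. t < i \<Longrightarrow> i \<le> d \<Longrightarrow> G i = H i"
proof -
  define D where "D = {i\<in>{1..d}. G i \<noteq> H i}"
  have fin: "finite D" and ne: "D \<noteq> {}" using assms unfolding D_def by auto
  define t where "t = Max D"
  have "t \<in> D" using fin ne unfolding t_def by simp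
  moreover have "\<And>i. t < i \<Longrightarrow> i \<le> d \<Longrightarrow> G i = H i"
  proof (rule ccontr)
    fix i assume "t < i" "i \<le> d" "G i \<noteq> H i"
    then have "i \<in> D" using \<open>t \<in> D\<close> unfolding D_def by auto
    then have "i \<le> t" using fin unfolding t_def by simp
    with \<open>t < i\<close> show False by simp
  qed
  ultimately show ?thesis using that unfolding D_def by auto
qed

lemma len_not_less:
  assumes rx: "macaulay_rep d a xs" and ry: "macaulay_rep d a' ys"
    and ag: "\<forall>i\<in>{1..d}. gf d xs i = gf d ys i"
  shows "\<not> length xs < length ys"
proof
  assume lt: "length xs < length ys"
  note fx = rep_facts[OF rx] and fy = rep_facts[OF ry]
  have Ly: "length ys \<le> d" using ry unfolding macaulay_rep_def by simp
  have Lx: "1 \<le> length xs" using rx unfolding macaulay_rep_def by (cases xs) auto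
  define i0 where "i0 = d - length xs"
  have i0: "1 \<le> i0" "i0 \<le> d" using lt Ly Lx unfolding i0_def by auto
  have "gf d xs i0 = i0 - 1" unfolding gf_def i0_def using Ly lt by auto
  moreover have "macaulay_low d ys \<le> i0" using lt Ly unfolding macaulay_low_def i0_def by auto
  then have "gf d ys (macaulay_low d ys) + (i0 - macaulay_low d ys) \<le> gf d ys i0"
    using gap[of d "gf d ys", OF fy(1)] fy(4) i0 by blast
  then have "i0 \<le> gf d ys i0" using fy(7) \<open>macaulay_low d ys \<le> i0\<close> by simp
  ultimately show False using ag i0 by force
qed

lemma gf_agree_eq:
  assumes rx: "macaulay_rep d a xs" and ry: "macaulay_rep d a' ys"
    and ag: "\<forall>i\<in>{1..d}. gf d xs i = gf d ys i"
  shows "xs = ys"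
proof -
  have "\<not> length xs < length ys" by (rule len_not_less[OF rx ry ag])
  moreover have "\<not> length ys < length xs" by (rule len_not_less[OF ry rx]) (use ag in auto)
  ultimately have L: "length xs = length ys" by simp
  have Ld: "length xs \<le> d" using rx unfolding macaulay_rep_def by simp
  show ?thesis
  proof (rule nth_equalityI[OF L])
    fix k assume k: "k < length xs"
    then have "d - k \<in> {1..d}" using Ld by auto
    then have "gf d xs (d - k) = gf d ys (d - k)" using ag by blast
    then show "xs ! k = ys ! k" using gf_nth[OF k Ld] gf_nth[of k ys d] k L Ld by simp
  qed
qed

lemma rep_unique:
  assumes rx: "macaulay_rep d a xs" and ry: "macaulay_rep d a ys"
  shows "xs = ys"
proof (cases "\<exists>i\<in>{1..d}. gf d xs i \<noteq> gf d ys i")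
  case True
  then obtain t where t: "1 \<le> t" "t \<le> d" "gf d xs t \<noteq> gf d ys t"
    and e: "\<And>i. t < i \<Longrightarrow> i \<le> d \<Longrightarrow> gf d xs i = gf d ys i"
    using first_diff[OF True] by blast
  show ?thesis
  proof (cases "gf d xs t < gf d ys t")
    case True
    from cmp(1)[OF rx ry t(1,2) True e] show ?thesis by simp
  next
    case False
    then have "gf d ys t < gf d xs t" using t(3) by simp
    from cmp(1)[OF ry rx t(1,2) this] e show ?thesis by simp
  qed
next
  case False
  then show ?thesis using gf_agree_eq[OF rx ry] by blast
qed

lemma upper_eq:
  assumes r: "macaulay_rep d a xs"
  shows "macaulay_upper d a = (\<Sum>i=1..d. gf d xs i choose (i+1))"
proof -
  have "(THE xs. macaulay_rep d a xs) = xs"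
  proof (rule the_equality)
    show "macaulay_rep d a xs" by (rule r)
  next
    fix ys assume "macaulay_rep d a ys"
    then show "ys = xs" by (rule rep_unique[OF _ r])
  qed
  then have "macaulay_upper d a = (\<Sum>k<length xs. xs ! k choose (d - k + 1))"
    unfolding macaulay_upper_def Let_def by simp
  then show ?thesis using rep_facts(3)[OF r] by simp
qed

theorem mainTheorem2:
  fixes d b c :: nat and bs cs :: "nat list"
  assumes "d \<ge> 1" and "0 < b" and "b < c"
    and "macaulay_rep d b bs" and "macaulay_rep d c cs"
  shows "macaulay_upper d b = macaulay_upper d c \<longleftrightarrow>
         (macaulay_low d bs \<ge> 2 \<and> c - b \<le> macaulay_low d bs - 1)"
proof -
  note rb = assms(4) and rc = assms(5)
  have "\<exists>i\<in>{1..d}. gf d bs i \<noteq> gf d cs i"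
  proof (rule ccontr)
    assume "\<not> ?thesis"
    then have "bs = cs" using gf_agree_eq[OF rb rc] by blast
    then have "b = c" using rep_facts(2)[OF rb] rep_facts(2)[OF rc] by simp
    with assms(3) show False by simp
  qed
  then obtain t where t: "1 \<le> t" "t \<le> d" "gf d bs t \<noteq> gf d cs t"
    and e: "\<And>i. t < i \<Longrightarrow> i \<le> d \<Longrightarrow> gf d bs i = gf d cs i"
    using first_diff[OF \<open>\<exists>i\<in>{1..d}. gf d bs i \<noteq> gf d cs i\<close>] by blast
  have lt: "gf d bs t < gf d cs t"
  proof (rule ccontr)
    assume "\<not> ?thesis"
    then have "gf d cs t < gf d bs t" using t(3) by simp
    from cmp(1)[OF rc rb t(1,2) this] e assms(3) show False by simp
  qed
  show ?thesis
    using cmp(2)[OF rb rc t(1,2) lt e] upper_eq[OF rb] upper_eq[OF rc] by simp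
qed

end
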